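(* Let $\phi=\tilde p/p$ be an irreducible rational inner function on $\mathbb{D}^3$ of degree $(m,n,1)$ with $p(z)=p_1(z_1,z_2)+z_3p_2(z_1,z_2)$, $\tilde p(z)=z_3\tilde p_1(z_1,z_2)+\tilde p_2(z_1,z_2)$, and suppose $\mathcal{Z}_p\cap\mathbb{T}^3$ is finite. Then for each $(\tau_1,\tau_2,\zeta_3)\in\mathcal{Z}_p\cap\mathbb{T}^3$, \[\phi^*(\tau_1,\tau_2,\tau_3)=\frac{\tilde p_2(\tau_1,\tau_2)}{p_1(\tau_1,\tau_2)}\in\mathbb{T}\quad\text{for all }\tau_3\in\mathbb{T},\] where $\phi^*$ denotes the nontangential limit of $\phi$.
   Context: A rational inner function (RIF) on $\mathbb{D}^3$ is a rational function holomorphic on the tridisk with unimodular radial limits a.e. on $\mathbb{T}^3$; it is written $\phi=\tilde p/p$ with $p$ zero-free on $\mathbb{D}^3$, $p,\tilde p$ without common factors. For degree $(m,n,1)$, $\tilde p(z)=z_1^mz_2^nz_3\overline{p(1/\bar z_1,1/\bar z_2,1/\bar z_3)}$ and $\tilde p_j(z_1,z_2)=z_1^mz_2^n\overline{p_j(1/\bar z_1,1/\bar z_2)}$. The nontangential limit $\phi^*(\tau)$ at $\tau\in\mathbb{T}^3$ is the limit as $z\to\tau$ in $\mathbb{D}^3$ with $\|z-\tau\|\le C(1-\|z\|)$; it exists and is unimodular at every $\tau\in\mathbb{T}^3$ for every RIF. $\mathcal{Z}_p$ is the zero set of $p$. *)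

theory Defs
  imports "HOL-Analysis.Analysis"
begin

text \<open>Polynomials in three complex variables are represented by their coefficient
  functions (finitely supported); polynomials in two variables likewise.
  Points of C^3 are triples.\<close>

type_synonym cpoly2 = "nat \<Rightarrow> nat \<Rightarrow> complex"
type_synonym cpoly3 = "nat \<Rightarrow> nat \<Rightarrow> nat \<Rightarrow> complex"
type_synonym cpt3 = "complex \<times> complex \<times> complex"

definition supp3 :: "cpoly3 \<Rightarrow> (nat \<times> nat \<times> nat) set" where
  "supp3 c = {(i,j,k). c i j k \<noteq> 0}"

definition is_poly3 :: "cpoly3 \<Rightarrow> bool" where
  "is_poly3 c \<longleftrightarrow> finite (supp3 c)"

definition supp2 :: "cpoly2 \<Rightarrow> (nat \<times> nat) set" where
  "supp2 c = {(i,j). c i j \<noteq> 0}"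

definition is_poly2 :: "cpoly2 \<Rightarrow> bool" where
  "is_poly2 c \<longleftrightarrow> finite (supp2 c)"

definition eval3 :: "cpoly3 \<Rightarrow> cpt3 \<Rightarrow> complex" where
  "eval3 c z = (case z of (z1,z2,z3) \<Rightarrow>
     (\<Sum>(i,j,k)\<in>supp3 c. c i j k * z1 ^ i * z2 ^ j * z3 ^ k))"

definition eval2 :: "cpoly2 \<Rightarrow> complex \<Rightarrow> complex \<Rightarrow> complex" where
  "eval2 c z1 z2 = (\<Sum>(i,j)\<in>supp2 c. c i j * z1 ^ i * z2 ^ j)"

definition deg3 :: "cpoly3 \<Rightarrow> nat \<times> nat \<times> nat" where
  "deg3 c = (Max ({0} \<union> (\<lambda>(i,j,k). i) ` supp3 c),
             Max ({0} \<union> (\<lambda>(i,j,k). j) ` supp3 c),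
             Max ({0} \<union> (\<lambda>(i,j,k). k) ` supp3 c))"

definition deg_le3 :: "cpoly3 \<Rightarrow> nat \<Rightarrow> nat \<Rightarrow> nat \<Rightarrow> bool" where
  "deg_le3 c m n l \<longleftrightarrow> (\<forall>(i,j,k)\<in>supp3 c. i \<le> m \<and> j \<le> n \<and> k \<le> l)"

definition deg_le2 :: "cpoly2 \<Rightarrow> nat \<Rightarrow> nat \<Rightarrow> bool" where
  "deg_le2 c m n \<longleftrightarrow> (\<forall>(i,j)\<in>supp2 c. i \<le> m \<and> j \<le> n)"

text \<open>Reflections: coefficientwise form of
  z1^m z2^n z3^l conj(p(1/conj z1, 1/conj z2, 1/conj z3)).\<close>
definition refl3 :: "nat \<Rightarrow> nat \<Rightarrow> nat \<Rightarrow> cpoly3 \<Rightarrow> cpoly3" where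
  "refl3 m n l c = (\<lambda>i j k. if i \<le> m \<and> j \<le> n \<and> k \<le> l
                           then cnj (c (m - i) (n - j) (l - k)) else 0)"

definition refl2 :: "nat \<Rightarrow> nat \<Rightarrow> cpoly2 \<Rightarrow> cpoly2" where
  "refl2 m n c = (\<lambda>i j. if i \<le> m \<and> j \<le> n then cnj (c (m - i) (n - j)) else 0)"

definition lin3 :: "cpoly2 \<Rightarrow> cpoly2 \<Rightarrow> cpoly3" where
  "lin3 p1 p2 = (\<lambda>i j k. if k = 0 then p1 i j else if k = 1 then p2 i j else 0)"

definition nonconst3 :: "cpoly3 \<Rightarrow> bool" where
  "nonconst3 c \<longleftrightarrow> supp3 c - {(0,0,0)} \<noteq> {}"

definition irreducible3 :: "cpoly3 \<Rightarrow> bool" where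
  "irreducible3 c \<longleftrightarrow> nonconst3 c \<and>
     (\<forall>f g. is_poly3 f \<and> is_poly3 g \<and> (\<forall>z. eval3 c z = eval3 f z * eval3 g z)
        \<longrightarrow> \<not> nonconst3 f \<or> \<not> nonconst3 g)"

definition common_factor3 :: "cpoly3 \<Rightarrow> cpoly3 \<Rightarrow> bool" where
  "common_factor3 p q \<longleftrightarrow> (\<exists>f g h. is_poly3 f \<and> is_poly3 g \<and> is_poly3 h \<and> nonconst3 f \<and>
     (\<forall>z. eval3 p z = eval3 f z * eval3 g z) \<and> (\<forall>z. eval3 q z = eval3 f z * eval3 h z))"

definition polydisc3 :: "cpt3 set" where
  "polydisc3 = {(z1,z2,z3). norm z1 < 1 \<and> norm z2 < 1 \<and> norm z3 < 1}"

definition torus3 :: "cpt3 set" where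
  "torus3 = {(z1,z2,z3). norm z1 = 1 \<and> norm z2 = 1 \<and> norm z3 = 1}"

definition maxnorm3 :: "cpt3 \<Rightarrow> real" where
  "maxnorm3 z = (case z of (z1,z2,z3) \<Rightarrow> max (norm z1) (max (norm z2) (norm z3)))"

definition nt_region :: "real \<Rightarrow> cpt3 \<Rightarrow> cpt3 set" where
  "nt_region C \<tau> = {z \<in> polydisc3. maxnorm3 (z - \<tau>) \<le> C * (1 - maxnorm3 z)}"

definition nt_limit :: "(cpt3 \<Rightarrow> complex) \<Rightarrow> cpt3 \<Rightarrow> complex \<Rightarrow> bool" where
  "nt_limit f \<tau> L \<longleftrightarrow> (\<forall>C>0. (f \<longlongrightarrow> L) (at \<tau> within nt_region C \<tau>))"

end

theory Submission
  imports Defs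
begin

lemma eval2_superset:
  assumes "finite A" "supp2 c \<subseteq> A"
  shows "eval2 c x y = (\<Sum>(i,j)\<in>A. c i j * x^i * y^j)"
  unfolding eval2_def
  by (rule sum.mono_neutral_left) (use assms in \<open>auto simp: supp2_def\<close>)

lemma eval3_superset:
  assumes "finite A" "supp3 c \<subseteq> A"
  shows "eval3 c (x,y,w) = (\<Sum>(i,j,k)\<in>A. c i j k * x^i * y^j * w^k)"
  unfolding eval3_def
  by simp (rule sum.mono_neutral_left, use assms in \<open>auto simp: supp3_def\<close>)

lemma eval3_lin3:
  assumes "is_poly2 a" "is_poly2 b"
  shows "eval3 (lin3 a b) (x,y,w) = eval2 a x y + w * eval2 b x y"
proof -
  define S where "S = supp2 a \<union> supp2 b"
  have fS: "finite S" using assms by (simp add: S_def is_poly2_def)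
  define A0 where "A0 = (\<lambda>(i,j). (i,j,0::nat)) ` S"
  define A1 where "A1 = (\<lambda>(i,j). (i,j,1::nat)) ` S"
  have sub: "supp3 (lin3 a b) \<subseteq> A0 \<union> A1"
    by (auto simp: supp3_def lin3_def A0_def A1_def S_def supp2_def split: if_splits)
  have "eval3 (lin3 a b) (x,y,w) = (\<Sum>(i,j,k)\<in>A0 \<union> A1. lin3 a b i j k * x^i * y^j * w^k)"
    by (rule eval3_superset) (use fS sub in \<open>auto simp: A0_def A1_def\<close>)
  also have "\<dots> = (\<Sum>(i,j,k)\<in>A0. lin3 a b i j k * x^i * y^j * w^k) + (\<Sum>(i,j,k)\<in>A1. lin3 a b i j k * x^i * y^j * w^k)"
    by (rule sum.union_disjoint) (use fS in \<open>auto simp: A0_def A1_def\<close>)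
  also have "(\<Sum>(i,j,k)\<in>A0. lin3 a b i j k * x^i * y^j * w^k) = (\<Sum>(i,j)\<in>S. a i j * x^i * y^j)"
    unfolding A0_def by (subst sum.reindex) (auto simp: inj_on_def lin3_def intro!: sum.cong)
  also have "\<dots> = eval2 a x y"
    by (rule eval2_superset[symmetric]) (use fS in \<open>auto simp: S_def\<close>)
  also have "(\<Sum>(i,j,k)\<in>A1. lin3 a b i j k * x^i * y^j * w^k) = w * (\<Sum>(i,j)\<in>S. b i j * x^i * y^j)"
    unfolding A1_def by (subst sum.reindex) (auto simp: inj_on_def lin3_def sum_distrib_left intro!: sum.cong)
  also have "(\<Sum>(i,j)\<in>S. b i j * x^i * y^j) = eval2 b x y"
    by (rule eval2_superset[symmetric]) (use fS in \<open>auto simp: S_def\<close>)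
  finally show ?thesis .
qed


lemma refl3_lin3: "refl3 m n 1 (lin3 a b) = lin3 (refl2 m n b) (refl2 m n a)"
  unfolding fun_eq_iff refl3_def lin3_def refl2_def
proof (intro allI)
  fix i j k :: nat
  show "(if i \<le> m \<and> j \<le> n \<and> k \<le> 1 then cnj (if 1 - k = 0 then a (m - i) (n - j) else if 1 - k = 1 then b (m - i) (n - j) else 0) else 0) =
       (if k = 0 then if i \<le> m \<and> j \<le> n then cnj (b (m - i) (n - j)) else 0 else if k = 1 then if i \<le> m \<and> j \<le> n then cnj (a (m - i) (n - j)) else 0 else 0)"
    by (cases "k = 0"; cases "k = 1"; simp)
qed
lemma unit_cnj: "norm (w::complex) = 1 \<Longrightarrow> w * cnj w = 1"
  by (metis complex_norm_square of_real_1 one_power2)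
lemma pow_unit: "norm (w::complex) = 1 \<Longrightarrow> i \<le> m \<Longrightarrow> w ^ (m - i) = w ^ m * cnj w ^ i"
proof -
  assume w: "norm w = 1" and i: "i \<le> m"
  have "w * cnj w = 1" using w by (rule unit_cnj)
  hence "w ^ i * cnj w ^ i = 1" by (metis power_mult_distrib power_one)
  moreover have "w ^ m = w ^ (m - i) * w ^ i" using i by (simp add: power_add[symmetric])
  ultimately show ?thesis by (metis mult.assoc mult.right_neutral)
qed

lemma refl2_poly: "is_poly2 (refl2 m n c)"
proof -
  have "supp2 (refl2 m n c) \<subseteq> {..m} \<times> {..n}" by (auto simp: supp2_def refl2_def split: if_splits)
  thus ?thesis unfolding is_poly2_def by (rule finite_subset) auto
qed

lemma refl2_torus:
  assumes "is_poly2 c" "deg_le2 c m n" "norm w1 = 1" "norm w2 = 1"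
  shows "eval2 (refl2 m n c) w1 w2 = w1^m * w2^n * cnj (eval2 c w1 w2)"
proof -
  define R where "R = {..m} \<times> {..n}"
  have fR: "finite R" by (simp add: R_def)
  have s1: "supp2 c \<subseteq> R" using assms(2) by (auto simp: deg_le2_def R_def supp2_def)
  have s2: "supp2 (refl2 m n c) \<subseteq> R" by (auto simp: supp2_def refl2_def R_def split: if_splits)
  have "eval2 (refl2 m n c) w1 w2 = (\<Sum>(i,j)\<in>R. refl2 m n c i j * w1^i * w2^j)"
    by (rule eval2_superset[OF fR s2])
  also have "\<dots> = (\<Sum>(i,j)\<in>R. cnj (c i j) * w1^(m-i) * w2^(n-j))"
    by (rule sum.reindex_bij_witness[of _ "\<lambda>(i,j). (m-i,n-j)" "\<lambda>(i,j). (m-i,n-j)"])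
       (auto simp: R_def refl2_def)
  also have "\<dots> = (\<Sum>(i,j)\<in>R. w1^m * w2^n * cnj (c i j * w1^i * w2^j))"
    by (rule sum.cong) (auto simp: R_def pow_unit assms)
  also have "\<dots> = w1^m * w2^n * cnj (eval2 c w1 w2)"
    by (simp add: eval2_superset[OF fR s1] sum_distrib_left case_prod_beta)
  finally show ?thesis .
qed


inductive_set pc :: "(complex \<times> complex \<Rightarrow> complex) set" where
  pc_const: "(\<lambda>z. c) \<in> pc"
| pc_fst: "fst \<in> pc"
| pc_snd: "snd \<in> pc"
| pc_add: "f \<in> pc \<Longrightarrow> g \<in> pc \<Longrightarrow> (\<lambda>z. f z + g z) \<in> pc"
| pc_mult: "f \<in> pc \<Longrightarrow> g \<in> pc \<Longrightarrow> (\<lambda>z. f z * g z) \<in> pc"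

lemma pc_diff: "f \<in> pc \<Longrightarrow> g \<in> pc \<Longrightarrow> (\<lambda>z. f z - g z) \<in> pc"
proof -
  assume f: "f \<in> pc" and g: "g \<in> pc"
  have "(\<lambda>z. f z + (\<lambda>z. -1) z * g z) \<in> pc" by (intro pc.intros f g)
  thus ?thesis by simp
qed

lemma pc_power: "f \<in> pc \<Longrightarrow> (\<lambda>z. f z ^ k) \<in> pc"
proof (induction k)
  case 0 then show ?case using pc_const[of 1] by simp
next
  case (Suc k) then show ?case using pc_mult[OF Suc.prems Suc.IH] by simp
qed

lemma pc_sum: "(\<And>a. a \<in> A \<Longrightarrow> f a \<in> pc) \<Longrightarrow> (\<lambda>z. \<Sum>a\<in>A. f a z) \<in> pc"
proof (induction A rule: infinite_finite_induct)
  case (infinite A) then show ?case using pc_const[of 0] by simp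
next
  case empty then show ?case using pc_const[of 0] by simp
next
  case (insert x F)
  have "(\<lambda>z. f x z + (\<lambda>z. \<Sum>a\<in>F. f a z) z) \<in> pc"
    by (rule pc_add) (use insert in auto)
  then show ?case using insert by simp
qed

lemma pc_eval2: "(\<lambda>z. eval2 c (fst z) (snd z)) \<in> pc"
  unfolding eval2_def
  by (rule pc_sum) (auto simp: case_prod_beta intro!: pc_mult pc_power pc.intros)

lemma pc_cont: "f \<in> pc \<Longrightarrow> continuous_on UNIV f"
  by (induction rule: pc.induct) (auto intro!: continuous_intros)

lemma pc_isCont: "f \<in> pc \<Longrightarrow> isCont f x"
  using pc_cont continuous_on_eq_continuous_at by blast

lemma pc_tendsto: "f \<in> pc \<Longrightarrow> (a \<longlongrightarrow> x) F \<Longrightarrow> (b \<longlongrightarrow> y) F \<Longrightarrow> ((\<lambda>w. f (a w, b w)) \<longlongrightarrow> f (x,y)) F"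
  by (rule isCont_tendsto_compose[OF pc_isCont]) (auto intro: tendsto_Pair)

lemma pc_factor:
  "f \<in> pc \<Longrightarrow> \<exists>g1\<in>pc. \<exists>g2\<in>pc. \<forall>z. f z = f t + (fst z - fst t) * g1 z + (snd z - snd t) * g2 z"
proof (induction rule: pc.induct)
  case (pc_const c)
  show ?case by (rule bexI[of _ "\<lambda>z. 0"], rule bexI[of _ "\<lambda>z. 0"]) (auto intro: pc.intros)
next
  case pc_fst
  show ?case by (rule bexI[of _ "\<lambda>z. 1"], rule bexI[of _ "\<lambda>z. 0"]) (auto intro: pc.intros)
next
  case pc_snd
  show ?case by (rule bexI[of _ "\<lambda>z. 0"], rule bexI[of _ "\<lambda>z. 1"]) (auto intro: pc.intros)
next
  case (pc_add f g)
  from pc_add.IH obtain f1 f2 g1 g2 where h: "f1 \<in> pc" "f2 \<in> pc" "g1 \<in> pc" "g2 \<in> pc"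
    "\<forall>z. f z = f t + (fst z - fst t) * f1 z + (snd z - snd t) * f2 z"
    "\<forall>z. g z = g t + (fst z - fst t) * g1 z + (snd z - snd t) * g2 z" by blast
  have e: "f z + g z = f t + g t + (fst z - fst t) * (f1 z + g1 z) + (snd z - snd t) * (f2 z + g2 z)" for z
  proof -
    have a: "f z = f t + (fst z - fst t) * f1 z + (snd z - snd t) * f2 z" using h(5) by blast
    have b: "g z = g t + (fst z - fst t) * g1 z + (snd z - snd t) * g2 z" using h(6) by blast
    show ?thesis unfolding a b by (simp add: algebra_simps)
  qed
  have m1: "(\<lambda>z. f1 z + g1 z) \<in> pc" "(\<lambda>z. f2 z + g2 z) \<in> pc" using h(1-4) by (auto intro: pc.intros)
  show ?case
    apply (rule bexI[where x="\<lambda>z. f1 z + g1 z"])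
     apply (rule bexI[where x="\<lambda>z. f2 z + g2 z"])
      apply (rule allI, rule e)
     apply (rule m1(2))
    apply (rule m1(1))
    done
next
  case (pc_mult f g)
  from pc_mult.IH obtain f1 f2 g1 g2 where h: "f1 \<in> pc" "f2 \<in> pc" "g1 \<in> pc" "g2 \<in> pc"
    "\<forall>z. f z = f t + (fst z - fst t) * f1 z + (snd z - snd t) * f2 z"
    "\<forall>z. g z = g t + (fst z - fst t) * g1 z + (snd z - snd t) * g2 z" by blast
  have e: "f z * g z = f t * g t + (fst z - fst t) * (f1 z * g z + f t * g1 z) + (snd z - snd t) * (f2 z * g z + f t * g2 z)" for z
  proof -
    have a: "f z = f t + (fst z - fst t) * f1 z + (snd z - snd t) * f2 z" using h(5) by blast
    have b: "g z = g t + (fst z - fst t) * g1 z + (snd z - snd t) * g2 z" using h(6) by blast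
    have "f z * g z = f t * g z + (fst z - fst t) * f1 z * g z + (snd z - snd t) * f2 z * g z"
      by (subst a) (simp add: algebra_simps)
    also have "f t * g z = f t * (g t + (fst z - fst t) * g1 z + (snd z - snd t) * g2 z)"
      by (subst b) (rule refl)
    finally show ?thesis by (simp add: algebra_simps)
  qed
  have m1: "(\<lambda>z. f1 z * g z + f t * g1 z) \<in> pc" "(\<lambda>z. f2 z * g z + f t * g2 z) \<in> pc"
    using h(1-4) pc_mult.hyps by (auto intro!: pc.intros)
  show ?case
    apply (rule bexI[where x="\<lambda>z. f1 z * g z + f t * g1 z"])
     apply (rule bexI[where x="\<lambda>z. f2 z * g z + f t * g2 z"])
      apply (rule allI, rule e)
     apply (rule m1(2))
    apply (rule m1(1))
    done
qed



lemma expq_lim: "((\<lambda>s::real. (exp (\<i> * complex_of_real s) - 1) / complex_of_real s) \<longlongrightarrow> \<i>) (at 0)"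
proof -
  have d: "DERIV (\<lambda>z. exp (\<i> * z)) 0 :> \<i>"
    by (auto intro!: derivative_eq_intros)
  have g: "((\<lambda>h. (exp (\<i> * h) - 1) / h) \<longlongrightarrow> \<i>) (at 0)"
    using DERIV_D[OF d] by simp
  have f: "(complex_of_real \<longlongrightarrow> 0) (at (0::real))"
    by (auto intro!: tendsto_eq_intros)
  have "(((\<lambda>h. (exp (\<i> * h) - 1) / h) \<circ> complex_of_real) \<longlongrightarrow> \<i>) (at (0::real))"
    by (rule tendsto_compose_at[OF f g]) (auto simp: eventually_at_filter)
  thus ?thesis by (simp add: o_def)
qed

lemma sign_lemma:
  fixes k :: "real \<Rightarrow> complex"
  assumes k: "(k \<longlongrightarrow> k0) (at 0)"
    and pos: "\<And>s. Im ((exp (\<i> * complex_of_real s) - 1) * k s) = 0 \<and> Re ((exp (\<i> * complex_of_real s) - 1) * k s) \<ge> 0"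
  shows "k0 = 0"
proof -
  define R where "R s = (exp (\<i> * complex_of_real s) - 1) * k s" for s
  have Rp: "Im (R s) = 0" "Re (R s) \<ge> 0" for s using pos[of s] unfolding R_def by auto
  define Q where "Q s = (exp (\<i> * complex_of_real s) - 1) / complex_of_real s * k s" for s
  have Ql: "(Q \<longlongrightarrow> \<i> * k0) (at 0)"
    unfolding Q_def by (intro tendsto_mult expq_lim k)
  have QR: "((\<lambda>s. Re (Q s)) \<longlongrightarrow> Re (\<i> * k0)) F" if "F \<le> at 0" for F
    by (rule tendsto_Re, rule tendsto_mono[OF that Ql])
  have QI: "((\<lambda>s. Im (Q s)) \<longlongrightarrow> Im (\<i> * k0)) (at 0)"
    by (rule tendsto_Im[OF Ql])
  have QR': "Q s = R s / complex_of_real s" for s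
    unfolding Q_def R_def by simp
  have QRe: "Re (Q s) = Re (R s) / s" for s
    unfolding QR' by (simp add: Re_divide_of_real)
  have QIm: "Im (Q s) = Im (R s) / s" for s
    unfolding QR' by (simp add: Im_divide_of_real)
  have "0 \<le> Re (\<i> * k0)"
  proof (rule tendsto_lowerbound[OF QR])
    show "at_right 0 \<le> at (0::real)" by (simp add: at_le)
    show "\<forall>\<^sub>F s in at_right 0. 0 \<le> Re (Q s)"
      unfolding QRe by (rule eventually_mono[OF eventually_at_right_less]) (rule divide_nonneg_pos[OF Rp(2)])
  qed simp
  moreover have "Re (\<i> * k0) \<le> 0"
  proof (rule tendsto_upperbound[OF QR])
    show "at_left 0 \<le> at (0::real)" by (simp add: at_le)
    show "\<forall>\<^sub>F s in at_left 0. Re (Q s) \<le> 0"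
      unfolding QRe
      using eventually_at_left_real[of "-1" 0, simplified] by (rule eventually_mono) (use Rp(2) in \<open>auto intro: divide_nonneg_neg\<close>)
  qed simp
  moreover have "Im (\<i> * k0) = 0"
  proof -
    have "((\<lambda>s. Im (Q s)) \<longlongrightarrow> 0) (at 0)" unfolding QIm Rp by simp
    thus ?thesis using QI tendsto_unique by (metis trivial_limit_at)
  qed
  ultimately have "\<i> * k0 = 0" by (simp add: complex_eq_iff)
  thus ?thesis by simp
qed

lemma infinite_circle: "infinite {w::complex. norm w = 1}"
proof
  assume f: "finite {w::complex. norm w = 1}"
  have e: "{w::complex. norm w = 1} = sphere 0 1" by auto
  have c: "connected (sphere (0::complex) 1)" by (rule connected_sphere) simp
  have "sphere (0::complex) 1 = {} \<or> (\<exists>a. sphere (0::complex) 1 = {a})"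
    using connected_finite_iff_sing[OF c] f e by simp
  moreover have "1 \<in> sphere (0::complex) 1" "-1 \<in> sphere (0::complex) 1" by auto
  ultimately show False by (metis empty_iff one_neq_neg_one singletonD)
qed

lemma prod_bound: "norm (a::complex) \<le> d \<Longrightarrow> norm b \<le> d \<Longrightarrow> norm (a * b * p) \<le> d^2 * norm p"
proof -
  assume a: "norm a \<le> d" and b: "norm b \<le> d"
  have "norm a * norm b \<le> d * d" by (rule mult_mono[OF a b]) (use a norm_ge_zero[of a] norm_ge_zero[of b] in linarith)+
  hence "norm a * norm b * norm p \<le> d * d * norm p" by (rule mult_right_mono) simp
  thus ?thesis by (simp add: norm_mult power2_eq_square)
qed
lemma quad_bound:
  fixes a b c1 c2 c3 c4 :: complex
  assumes "norm a \<le> d" "norm b \<le> d"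
  shows "norm (a*(a*c1 + b*c2) + b*(a*c3 + b*c4)) \<le> d^2*(norm c1 + norm c2 + norm c3 + norm c4)"
proof -
  have e: "a*(a*c1 + b*c2) + b*(a*c3 + b*c4) = a*a*c1 + a*b*c2 + (b*a*c3 + b*b*c4)" by (simp add: algebra_simps)
  have "norm (a*a*c1 + a*b*c2 + (b*a*c3 + b*b*c4)) \<le> norm (a*a*c1) + norm (a*b*c2) + (norm (b*a*c3) + norm (b*b*c4))"
    by (intro order.trans[OF norm_triangle_ineq] add_mono norm_triangle_ineq order.refl)
  also have "\<dots> \<le> d^2 * norm c1 + d^2 * norm c2 + (d^2 * norm c3 + d^2 * norm c4)"
    by (intro add_mono prod_bound assms)
  finally show ?thesis unfolding e by (simp add: algebra_simps)
qed

lemma ident_alg: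
  fixes a1 a2 q1 q2 w L :: complex
  assumes "a2 \<noteq> 0" "a1 + w * a2 \<noteq> 0"
  shows "(q2 + w * q1) / (a1 + w * a2) - L = (q1 - L * a2) / a2 - (a1 * q1 - a2 * q2) / (a2 * (a1 + w * a2))"
proof -
  define D where "D = a1 + w * a2"
  have D: "D \<noteq> 0" using assms by (simp add: D_def)
  have "(q1 - L * a2) / a2 - (a1 * q1 - a2 * q2) / (a2 * D) = ((q1 - L * a2) * D - (a1 * q1 - a2 * q2)) / (a2 * D)"
    using assms(1) D by (simp add: diff_divide_distrib)
  also have "(q1 - L * a2) * D - (a1 * q1 - a2 * q2) = a2 * ((q2 + w * q1) - L * D)"
    by (simp add: D_def algebra_simps)
  also have "a2 * ((q2 + w * q1) - L * D) / (a2 * D) = (q2 + w * q1) / D - L"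
    using assms(1) D by (simp add: diff_divide_distrib)
  finally show ?thesis by (simp add: D_def)
qed


theorem corollary4p3:
  fixes m n :: nat and p1 p2 :: cpoly2 and \<tau>1 \<tau>2 \<zeta>3 :: complex
  defines "p \<equiv> lin3 p1 p2"
  defines "pt \<equiv> refl3 m n 1 p"
  defines "\<phi> \<equiv> (\<lambda>z. eval3 pt z / eval3 p z)"
  assumes poly: "is_poly2 p1" "is_poly2 p2"
      and degle: "deg_le2 p1 m n" "deg_le2 p2 m n"
      and deg: "deg3 pt = (m, n, 1)"
      and zerofree: "\<forall>z\<in>polydisc3. eval3 p z \<noteq> 0"
      and coprime: "\<not> common_factor3 p pt"
      and irred: "irreducible3 p"
      and finite_zeros: "finite {z \<in> torus3. eval3 p z = 0}"
      and zero: "(\<tau>1, \<tau>2, \<zeta>3) \<in> torus3" "eval3 p (\<tau>1, \<tau>2, \<zeta>3) = 0"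
  shows "\<forall>\<tau>3. norm \<tau>3 = 1 \<longrightarrow>
           nt_limit \<phi> (\<tau>1, \<tau>2, \<tau>3) (eval2 (refl2 m n p2) \<tau>1 \<tau>2 / eval2 p1 \<tau>1 \<tau>2)
         \<and> norm (eval2 (refl2 m n p2) \<tau>1 \<tau>2 / eval2 p1 \<tau>1 \<tau>2) = 1"
proof -
  define t where "t = (\<tau>1, \<tau>2)"
  define P1 where "P1 w = eval2 p1 (fst w) (snd w)" for w
  define P2 where "P2 w = eval2 p2 (fst w) (snd w)" for w
  define Q1 where "Q1 w = eval2 (refl2 m n p1) (fst w) (snd w)" for w
  define Q2 where "Q2 w = eval2 (refl2 m n p2) (fst w) (snd w)" for w
  have pcP: "P1 \<in> pc" "P2 \<in> pc" "Q1 \<in> pc" "Q2 \<in> pc"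
    unfolding P1_def P2_def Q1_def Q2_def by (rule pc_eval2)+
  have ep: "eval3 p (x,y,w) = P1 (x,y) + w * P2 (x,y)" for x y w
    unfolding p_def P1_def P2_def using eval3_lin3[OF poly] by simp
  have ept: "eval3 pt (x,y,w) = Q2 (x,y) + w * Q1 (x,y)" for x y w
    unfolding pt_def p_def refl3_lin3 Q1_def Q2_def using eval3_lin3[OF refl2_poly refl2_poly] by simp
  have phi: "\<phi> (x,y,w) = (Q2 (x,y) + w * Q1 (x,y)) / (P1 (x,y) + w * P2 (x,y))" for x y w
    unfolding \<phi>_def ep ept ..
  have D2: "norm (P2 (x,y)) \<le> norm (P1 (x,y)) \<and> P1 (x,y) \<noteq> 0" if "norm x < 1" "norm y < 1" for x y
  proof (intro conjI)
    show "norm (P2 (x,y)) \<le> norm (P1 (x,y))"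
    proof (rule ccontr)
      assume "\<not> ?thesis"
      hence lt: "norm (P1 (x,y)) < norm (P2 (x,y))" by simp
      hence nz: "P2 (x,y) \<noteq> 0" by auto
      define w where "w = - P1 (x,y) / P2 (x,y)"
      have "norm w < 1" using lt nz by (simp add: w_def norm_divide divide_less_eq)
      hence "(x,y,w) \<in> polydisc3" using that by (simp add: polydisc3_def)
      moreover have "eval3 p (x,y,w) = 0" unfolding ep w_def using nz by (simp add: field_simps)
      ultimately show False using zerofree by blast
    qed
    show "P1 (x,y) \<noteq> 0"
    proof
      assume "P1 (x,y) = 0"
      hence "eval3 p (x,y,0) = 0" by (simp add: ep)
      moreover have "(x,y,0) \<in> polydisc3" using that by (simp add: polydisc3_def)
      ultimately show False using zerofree by blast
    qed
  qed
  have T2: "norm (P2 (x,y)) \<le> norm (P1 (x,y))" if "norm x = 1" "norm y = 1" for x y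
  proof -
    define r where "r k = 1 - 1 / (real k + 2)" for k
    have "(\<lambda>k. 1 / real (k + 2)) \<longlonglongrightarrow> 0"
      by (rule LIMSEQ_ignore_initial_segment[OF lim_const_over_n])
    hence "(\<lambda>k. 1 / (real k + 2)) \<longlonglongrightarrow> 0" by (simp add: add.commute)
    hence r1: "r \<longlonglongrightarrow> 1" unfolding r_def using tendsto_diff[of "\<lambda>_. 1::real" 1] by fastforce
    have r01: "0 \<le> r k" "r k < 1" for k unfolding r_def by (auto simp: field_simps)
    have c1: "(\<lambda>k. complex_of_real (r k) * x) \<longlonglongrightarrow> x" "(\<lambda>k. complex_of_real (r k) * y) \<longlonglongrightarrow> y"
      using tendsto_mult[OF tendsto_of_real[OF r1], of "\<lambda>_. x"] tendsto_mult[OF tendsto_of_real[OF r1], of "\<lambda>_. y"] by simp_all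
    have l1: "(\<lambda>k. norm (P1 (complex_of_real (r k) * x, complex_of_real (r k) * y))) \<longlonglongrightarrow> norm (P1 (x,y))"
      by (intro tendsto_norm pc_tendsto pcP c1)
    have l2: "(\<lambda>k. norm (P2 (complex_of_real (r k) * x, complex_of_real (r k) * y))) \<longlonglongrightarrow> norm (P2 (x,y))"
      by (intro tendsto_norm pc_tendsto pcP c1)
    show ?thesis
    proof (rule tendsto_le[OF _ l1 l2])
      show "\<forall>\<^sub>F k in sequentially. norm (P2 (complex_of_real (r k) * x, complex_of_real (r k) * y)) \<le> norm (P1 (complex_of_real (r k) * x, complex_of_real (r k) * y))"
        using D2 r01 that by (auto simp: norm_mult)
    qed simp
  qed
  have tor: "norm \<tau>1 = 1" "norm \<tau>2 = 1" "norm \<zeta>3 = 1" using zero(1) by (auto simp: torus3_def)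
  have z0: "P1 t + \<zeta>3 * P2 t = 0" using zero(2) by (simp add: ep t_def)
  have P1t: "P1 t \<noteq> 0"
  proof
    assume a: "P1 t = 0"
    hence b: "P2 t = 0" using z0 tor(3) by auto
    have "(\<lambda>w. (\<tau>1, \<tau>2, w)) ` {w. norm w = 1} \<subseteq> {z \<in> torus3. eval3 p z = 0}"
      using a b tor by (auto simp: torus3_def ep t_def)
    hence "finite ((\<lambda>w. (\<tau>1, \<tau>2, w)) ` {w::complex. norm w = 1})"
      using finite_zeros finite_subset by blast
    hence "finite {w::complex. norm w = 1}" using finite_imageD inj_on_def by (metis (no_types, lifting) prod.inject)
    thus False using infinite_circle by blast
  qed
  have z3nz: "\<zeta>3 \<noteq> 0" using tor(3) by auto
  have P2t_eq: "P2 t = - P1 t / \<zeta>3"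
  proof -
    have "P1 t = - (\<zeta>3 * P2 t)" using z0 by (simp add: eq_neg_iff_add_eq_0)
    thus ?thesis using z3nz by (simp add: field_simps)
  qed
  have P2t: "P2 t \<noteq> 0" using P2t_eq P1t tor(3) by auto
  have nP2t: "norm (P2 t) = norm (P1 t)" using P2t_eq tor(3) by (simp add: norm_divide)
  define u where "u = \<tau>1 ^ m * \<tau>2 ^ n"
  have nu: "norm u = 1" using tor by (simp add: u_def norm_mult norm_power)
  have Q1t: "Q1 t = u * cnj (P1 t)" unfolding Q1_def P1_def u_def t_def using refl2_torus[OF poly(1) degle(1) tor(1,2)] by simp
  have Q2t: "Q2 t = u * cnj (P2 t)" unfolding Q2_def P2_def u_def t_def using refl2_torus[OF poly(2) degle(2) tor(1,2)] by simp
  define L where "L = Q2 t / P1 t"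
  have Leq: "L = eval2 (refl2 m n p2) \<tau>1 \<tau>2 / eval2 p1 \<tau>1 \<tau>2" by (simp add: L_def Q2_def P1_def t_def)
  have nL: "norm L = 1" unfolding L_def Q2t using nu nP2t P1t by (simp add: norm_divide norm_mult)
  have sqeq: "P2 t * cnj (P2 t) = P1 t * cnj (P1 t)"
    using nP2t by (metis complex_norm_square)
  define B where "B w = Q1 w - L * P2 w" for w
  define E where "E w = P1 w * Q1 w - P2 w * Q2 w" for w
  have pcBE: "B \<in> pc" "E \<in> pc" unfolding B_def E_def by (intro pc_diff pc_mult pcP pc_const)+
  have Bt: "B t = 0"
  proof -
    have "L * P2 t = u * (P2 t * cnj (P2 t)) / P1 t" unfolding L_def Q2t by (simp add: field_simps)
    also have "\<dots> = u * cnj (P1 t)" unfolding sqeq using P1t by (simp add: field_simps)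
    finally show ?thesis unfolding B_def Q1t by simp
  qed
  have Et: "E t = 0" unfolding E_def Q1t Q2t using sqeq by (simp add: algebra_simps)
  have Etor: "Im (E (x,y) * cnj (x^m * y^n)) = 0 \<and> Re (E (x,y) * cnj (x^m * y^n)) \<ge> 0" if "norm x = 1" "norm y = 1" for x y
  proof -
    have q1: "Q1 (x,y) = x^m * y^n * cnj (P1 (x,y))" unfolding Q1_def P1_def using refl2_torus[OF poly(1) degle(1) that] by simp
    have q2: "Q2 (x,y) = x^m * y^n * cnj (P2 (x,y))" unfolding Q2_def P2_def using refl2_torus[OF poly(2) degle(2) that] by simp
    have uu: "x^m * y^n * cnj (x^m * y^n) = 1" by (rule unit_cnj) (simp add: norm_mult norm_power that)
    have "E (x,y) * cnj (x^m * y^n) = (x^m * y^n * cnj (x^m * y^n)) * (P1 (x,y) * cnj (P1 (x,y)) - P2 (x,y) * cnj (P2 (x,y)))"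
      unfolding E_def q1 q2 by (simp add: algebra_simps)
    also have "\<dots> = complex_of_real ((norm (P1 (x,y)))^2 - (norm (P2 (x,y)))^2)"
      unfolding uu by (simp add: complex_norm_square[symmetric])
    finally show ?thesis using T2[OF that] by (simp add: power_mono)
  qed
  obtain g1 g2 where g: "g1 \<in> pc" "g2 \<in> pc" "\<forall>z. E z = E t + (fst z - fst t) * g1 z + (snd z - snd t) * g2 z"
    using pc_factor[OF pcBE(2), of t] by blast
  have Eg: "E (x,y) = (x - \<tau>1) * g1 (x,y) + (y - \<tau>2) * g2 (x,y)" for x y
  proof -
    have "E (x,y) = E t + (fst (x,y) - fst t) * g1 (x,y) + (snd (x,y) - snd t) * g2 (x,y)" using g(3) by blast
    thus ?thesis using Et by (simp add: t_def)
  qed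
  have ne: "norm (exp (\<i> * complex_of_real s)) = 1" for s by simp
  have g1t: "g1 t = 0"
  proof -
    define k where "k s = g1 (\<tau>1 * exp (\<i> * complex_of_real s), \<tau>2) * \<tau>1 * cnj ((\<tau>1 * exp (\<i> * complex_of_real s))^m * \<tau>2^n)" for s
    have kl: "(k \<longlongrightarrow> g1 t * \<tau>1 * cnj u) (at 0)"
    proof -
      have "((\<lambda>s. \<tau>1 * exp (\<i> * complex_of_real s)) \<longlongrightarrow> \<tau>1 * exp (\<i> * complex_of_real 0)) (at 0)"
        by (intro tendsto_intros)
      hence a: "((\<lambda>s. \<tau>1 * exp (\<i> * complex_of_real s)) \<longlongrightarrow> \<tau>1) (at 0)" by simp
      have "(k \<longlongrightarrow> g1 (\<tau>1, \<tau>2) * \<tau>1 * cnj (\<tau>1^m * \<tau>2^n)) (at 0)"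
        unfolding k_def by (intro tendsto_intros pc_tendsto[OF g(1)] a)
      thus ?thesis by (simp add: t_def u_def)
    qed
    have "g1 t * \<tau>1 * cnj u = 0"
    proof (rule sign_lemma[OF kl])
      fix s
      define x where "x = \<tau>1 * exp (\<i> * complex_of_real s)"
      have nx: "norm x = 1" using tor by (simp add: x_def norm_mult)
      have "(exp (\<i> * complex_of_real s) - 1) * k s = E (x, \<tau>2) * cnj (x^m * \<tau>2^n)"
        unfolding Eg k_def x_def by (simp add: algebra_simps)
      thus "Im ((exp (\<i> * complex_of_real s) - 1) * k s) = 0 \<and> 0 \<le> Re ((exp (\<i> * complex_of_real s) - 1) * k s)"
        using Etor[OF nx tor(2)] by simp
    qed
    moreover have "\<tau>1 \<noteq> 0" "cnj u \<noteq> 0" using tor nu by auto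
    ultimately show ?thesis by simp
  qed
  have g2t: "g2 t = 0"
  proof -
    define k where "k s = g2 (\<tau>1, \<tau>2 * exp (\<i> * complex_of_real s)) * \<tau>2 * cnj (\<tau>1^m * (\<tau>2 * exp (\<i> * complex_of_real s))^n)" for s
    have kl: "(k \<longlongrightarrow> g2 t * \<tau>2 * cnj u) (at 0)"
    proof -
      have "((\<lambda>s. \<tau>2 * exp (\<i> * complex_of_real s)) \<longlongrightarrow> \<tau>2 * exp (\<i> * complex_of_real 0)) (at 0)"
        by (intro tendsto_intros)
      hence a: "((\<lambda>s. \<tau>2 * exp (\<i> * complex_of_real s)) \<longlongrightarrow> \<tau>2) (at 0)" by simp
      have "(k \<longlongrightarrow> g2 (\<tau>1, \<tau>2) * \<tau>2 * cnj (\<tau>1^m * \<tau>2^n)) (at 0)"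
        unfolding k_def by (intro tendsto_intros pc_tendsto[OF g(2)] a)
      thus ?thesis by (simp add: t_def u_def)
    qed
    have "g2 t * \<tau>2 * cnj u = 0"
    proof (rule sign_lemma[OF kl])
      fix s
      define y where "y = \<tau>2 * exp (\<i> * complex_of_real s)"
      have ny: "norm y = 1" using tor by (simp add: y_def norm_mult)
      have "(exp (\<i> * complex_of_real s) - 1) * k s = E (\<tau>1, y) * cnj (\<tau>1^m * y^n)"
        unfolding Eg k_def y_def by (simp add: algebra_simps)
      thus "Im ((exp (\<i> * complex_of_real s) - 1) * k s) = 0 \<and> 0 \<le> Re ((exp (\<i> * complex_of_real s) - 1) * k s)"
        using Etor[OF tor(1) ny] by simp
    qed
    moreover have "\<tau>2 \<noteq> 0" "cnj u \<noteq> 0" using tor nu by auto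
    ultimately show ?thesis by simp
  qed
  obtain g11 g12 where g1f: "g11 \<in> pc" "g12 \<in> pc" "\<forall>z. g1 z = g1 t + (fst z - fst t) * g11 z + (snd z - snd t) * g12 z"
    using pc_factor[OF g(1), of t] by blast
  obtain g21 g22 where g2f: "g21 \<in> pc" "g22 \<in> pc" "\<forall>z. g2 z = g2 t + (fst z - fst t) * g21 z + (snd z - snd t) * g22 z"
    using pc_factor[OF g(2), of t] by blast
  define G where "G w = norm (g11 w) + norm (g12 w) + norm (g21 w) + norm (g22 w)" for w
  have Ebound: "norm (E (x,y)) \<le> d^2 * G (x,y)" if "norm (x - \<tau>1) \<le> d" "norm (y - \<tau>2) \<le> d" for x y d
  proof -
    have "E (x,y) = (x - \<tau>1) * ((x - \<tau>1) * g11 (x,y) + (y - \<tau>2) * g12 (x,y)) + (y - \<tau>2) * ((x - \<tau>1) * g21 (x,y) + (y - \<tau>2) * g22 (x,y))"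
    proof -
      have a: "g1 (x,y) = g1 t + (fst (x,y) - fst t) * g11 (x,y) + (snd (x,y) - snd t) * g12 (x,y)" using g1f(3) by blast
      have b: "g2 (x,y) = g2 t + (fst (x,y) - fst t) * g21 (x,y) + (snd (x,y) - snd t) * g22 (x,y)" using g2f(3) by blast
      show ?thesis unfolding Eg using a b g1t g2t by (simp add: t_def)
    qed
    thus ?thesis unfolding G_def using quad_bound[OF that] by simp
  qed
  show ?thesis
  proof (intro allI impI conjI)
    fix \<tau>3 :: complex assume nt3: "norm \<tau>3 = 1"
    show "norm (eval2 (refl2 m n p2) \<tau>1 \<tau>2 / eval2 p1 \<tau>1 \<tau>2) = 1" using nL Leq by simp
    show "nt_limit \<phi> (\<tau>1, \<tau>2, \<tau>3) (eval2 (refl2 m n p2) \<tau>1 \<tau>2 / eval2 p1 \<tau>1 \<tau>2)"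
      unfolding nt_limit_def Leq[symmetric]
    proof (intro allI impI)
      fix C :: real assume C: "C > 0"
      define T where "T = (\<tau>1, \<tau>2, \<tau>3)"
      define S where "S = nt_region C T"
      define dl where "dl z = 1 - maxnorm3 z" for z
      define F where "F z = norm (B (fst z, fst (snd z)) / P2 (fst z, fst (snd z))) + C^2 * dl z * G (fst z, fst (snd z)) / (norm (P1 (fst z, fst (snd z))) * norm (P2 (fst z, fst (snd z))))" for z
      have mn: "maxnorm3 z = max (norm (fst z)) (max (norm (fst (snd z))) (norm (snd (snd z))))" for z
        by (cases z) (simp add: maxnorm3_def)
      have c1: "((\<lambda>z. fst z) \<longlongrightarrow> fst T) (at T within S)" "((\<lambda>z. fst (snd z)) \<longlongrightarrow> fst (snd T)) (at T within S)"
        "((\<lambda>z. snd (snd z)) \<longlongrightarrow> snd (snd T)) (at T within S)"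
        by (intro tendsto_intros)+
      have Tt: "(fst T, fst (snd T)) = t" by (simp add: T_def t_def)
      have P2l: "((\<lambda>z. P2 (fst z, fst (snd z))) \<longlongrightarrow> P2 t) (at T within S)"
        using pc_tendsto[OF pcP(2) c1(1,2)] Tt by simp
      have Fl0: "(F \<longlongrightarrow> norm (B (fst T, fst (snd T)) / P2 (fst T, fst (snd T))) + C^2 * (1 - max (norm (fst T)) (max (norm (fst (snd T))) (norm (snd (snd T))))) * (norm (g11 (fst T, fst (snd T))) + norm (g12 (fst T, fst (snd T))) + norm (g21 (fst T, fst (snd T))) + norm (g22 (fst T, fst (snd T)))) / (norm (P1 (fst T, fst (snd T))) * norm (P2 (fst T, fst (snd T))))) (at T within S)"
        unfolding F_def dl_def mn G_def
        by (intro tendsto_intros pc_tendsto c1 pcP pcBE g1f g2f) (use Tt P1t P2t in auto)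
      have Fl: "(F \<longlongrightarrow> 0) (at T within S)"
        using Fl0 unfolding Tt by (simp add: Bt T_def tor nt3)
      have ev1: "\<forall>\<^sub>F z in at T within S. P2 (fst z, fst (snd z)) \<noteq> 0"
        by (rule tendsto_imp_eventually_ne[OF P2l P2t])
      have ev2: "\<forall>\<^sub>F z in at T within S. z \<in> S"
        by (auto simp: eventually_at_filter)
      have bound: "norm (\<phi> z - L) \<le> F z" if zS: "z \<in> S" and nz: "P2 (fst z, fst (snd z)) \<noteq> 0" for z
      proof -
        obtain x y w where zz: "z = (x,y,w)" by (cases z)
        have xyw: "norm x < 1" "norm y < 1" "norm w < 1"
          using zS by (auto simp: zz S_def nt_region_def polydisc3_def)
        define d where "d = dl z"
        have dpos: "d > 0" using xyw by (simp add: d_def dl_def zz mn)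
        have nw: "norm w \<le> 1 - d" by (simp add: d_def dl_def zz mn)
        have d1: "d \<le> 1" using norm_ge_zero[of x] by (simp add: d_def dl_def zz mn le_max_iff_disj)
        have "maxnorm3 (z - T) \<le> C * d" using zS by (simp add: S_def nt_region_def d_def dl_def)
        hence dx: "norm (x - \<tau>1) \<le> C * d" and dy: "norm (y - \<tau>2) \<le> C * d"
          by (simp_all add: zz T_def mn)
        note D2xy = D2[OF xyw(1,2)]
        define a1 where "a1 = P1 (x,y)"
        define a2 where "a2 = P2 (x,y)"
        have a1nz: "a1 \<noteq> 0" and a21: "norm a2 \<le> norm a1" using D2xy by (simp_all add: a1_def a2_def)
        have a2nz: "a2 \<noteq> 0" using nz by (simp add: a2_def zz)
        define D where "D = a1 + w * a2"
        have "norm a1 - norm (w * a2) \<le> norm D"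
          using norm_triangle_ineq2[of a1 "- (w * a2)"] by (simp add: D_def)
        moreover have "norm (w * a2) \<le> (1 - d) * norm a1"
          unfolding norm_mult by (rule mult_mono[OF nw a21]) (use d1 in auto)
        ultimately have Dl: "d * norm a1 \<le> norm D" by (simp add: algebra_simps)
        have Dpos: "0 < d * norm a1" using dpos a1nz by simp
        hence Dnz: "D \<noteq> 0" using Dl by auto
        have ident: "\<phi> z - L = B (x,y) / a2 - E (x,y) / (a2 * D)"
          unfolding zz phi B_def E_def a1_def[symmetric] a2_def[symmetric]
          unfolding D_def by (rule ident_alg[OF a2nz Dnz[unfolded D_def]])
        have "norm (\<phi> z - L) \<le> norm (B (x,y) / a2) + norm (E (x,y)) / (norm a2 * norm D)"
          unfolding ident using norm_triangle_ineq4[of "B (x,y) / a2" "E (x,y) / (a2 * D)"]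
          by (simp add: norm_divide norm_mult)
        also have "norm (E (x,y)) / (norm a2 * norm D) \<le> (C * d)^2 * G (x,y) / (norm a2 * (d * norm a1))"
        proof (rule frac_le)
          show "0 \<le> (C * d)^2 * G (x,y)" by (simp add: G_def)
          show "norm (E (x,y)) \<le> (C * d)^2 * G (x,y)" by (rule Ebound[OF dx dy])
          show "0 < norm a2 * (d * norm a1)" using a2nz Dpos by simp
          show "norm a2 * (d * norm a1) \<le> norm a2 * norm D" by (rule mult_left_mono[OF Dl]) simp
        qed
        also have "(C * d)^2 * G (x,y) / (norm a2 * (d * norm a1)) = C^2 * d * G (x,y) / (norm a1 * norm a2)"
          using dpos by (simp add: field_simps power2_eq_square)
        finally show ?thesis by (simp add: F_def zz a1_def a2_def d_def)
      qed
      have "((\<lambda>z. \<phi> z - L) \<longlongrightarrow> 0) (at T within S)"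
        by (rule Lim_null_comparison[OF eventually_mono[OF eventually_conj[OF ev1 ev2]] Fl]) (use bound in auto)
      thus "(\<phi> \<longlongrightarrow> L) (at (\<tau>1, \<tau>2, \<tau>3) within nt_region C (\<tau>1, \<tau>2, \<tau>3))"
        unfolding T_def S_def by (rule LIM_zero_cancel)
    qed
  qed
qed
end
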